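(* Let $A$ be a Banach algebra with a central bounded approximate identity. Then every approximately semi-inner derivation from $A$ into a Banach $A$-bimodule is approximately inner. In particular, this holds when $A$ is unital.
   Context: For a Banach algebra $A$ and a Banach $A$-bimodule $X$, a derivation is a linear map $D:A\to X$ with $D(ab)=a\cdot D(b)+D(a)\cdot b$. A continuous derivation $D:A\to X$ is approximately semi-inner if there are nets $(\xi_i),(\eta_i)$ in $X$ (over the same directed set) with $D(a)=\lim_i(a\cdot\xi_i-\eta_i\cdot a)$ in norm for every $a\in A$; it is approximately inner if there is a net $(\xi_i)$ in $X$ with $D(a)=\lim_i(a\cdot\xi_i-\xi_i\cdot a)$ in norm for every $a\in A$. A central bounded approximate identity is a bounded net $(e_\alpha)$ of elements of the centre of $A$ with $e_\alpha a\to a$ for all $a\in A$. *)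

theory Defs
  imports "HOL-Analysis.Analysis"
begin

definition banach_bimodule ::
  "('a::{real_normed_algebra,banach} \<Rightarrow> 'x::banach \<Rightarrow> 'x) \<Rightarrow> ('x \<Rightarrow> 'a \<Rightarrow> 'x) \<Rightarrow> bool" where
  "banach_bimodule lm rm \<longleftrightarrow>
     bounded_bilinear lm \<and> bounded_bilinear rm \<and>
     (\<forall>a b x. lm a (lm b x) = lm (a * b) x) \<and>
     (\<forall>x a b. rm (rm x a) b = rm x (a * b)) \<and>
     (\<forall>a x b. rm (lm a x) b = lm a (rm x b))"

definition derivation ::
  "('a::{real_normed_algebra,banach} \<Rightarrow> 'x::banach \<Rightarrow> 'x) \<Rightarrow> ('x \<Rightarrow> 'a \<Rightarrow> 'x) \<Rightarrow> ('a \<Rightarrow> 'x) \<Rightarrow> bool" where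
  "derivation lm rm D \<longleftrightarrow> linear D \<and> (\<forall>a b. D (a * b) = lm a (D b) + rm (D a) b)"

text \<open>Nets are represented by proper filters (F \<noteq> bot) on the space of values:
a net (x_i) over a directed set corresponds to its image filter, and conversely
every proper filter is the tail filter of a net.\<close>

definition approx_semi_inner ::
  "('a::{real_normed_algebra,banach} \<Rightarrow> 'x::banach \<Rightarrow> 'x) \<Rightarrow> ('x \<Rightarrow> 'a \<Rightarrow> 'x) \<Rightarrow> ('a \<Rightarrow> 'x) \<Rightarrow> bool" where
  "approx_semi_inner lm rm D \<longleftrightarrow>
     bounded_linear D \<and>
     (\<exists>F :: ('x \<times> 'x) filter. F \<noteq> bot \<and>
        (\<forall>a. ((\<lambda>(\<xi>, \<eta>). lm a \<xi> - rm \<eta> a) \<longlongrightarrow> D a) F))"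

definition approx_inner ::
  "('a::{real_normed_algebra,banach} \<Rightarrow> 'x::banach \<Rightarrow> 'x) \<Rightarrow> ('x \<Rightarrow> 'a \<Rightarrow> 'x) \<Rightarrow> ('a \<Rightarrow> 'x) \<Rightarrow> bool" where
  "approx_inner lm rm D \<longleftrightarrow>
     bounded_linear D \<and>
     (\<exists>F :: 'x filter. F \<noteq> bot \<and>
        (\<forall>a. ((\<lambda>\<xi>. lm a \<xi> - rm \<xi> a) \<longlongrightarrow> D a) F))"

definition has_central_bai :: "'a::{real_normed_algebra,banach} itself \<Rightarrow> bool" where
  "has_central_bai (_::'a itself) \<longleftrightarrow>
     (\<exists>(F :: 'a filter) K. F \<noteq> bot \<and>
        eventually (\<lambda>e. (\<forall>b. e * b = b * e) \<and> norm e \<le> K) F \<and>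
        (\<forall>a. ((\<lambda>e. e * a) \<longlongrightarrow> a) F))"

end

theory Submission
  imports Defs
begin

context
  fixes lm :: "'a::{real_normed_algebra,banach} \<Rightarrow> 'x::banach \<Rightarrow> 'x"
    and rm :: "'x \<Rightarrow> 'a \<Rightarrow> 'x"
    and D :: "'a \<Rightarrow> 'x"
  assumes bb: "banach_bimodule lm rm"
    and der: "derivation lm rm D"
    and blD: "bounded_linear D"
begin

lemma L: "bounded_bilinear lm" and R: "bounded_bilinear rm"
  and ll: "lm a (lm b x) = lm (a * b) x"
  and rr: "rm (rm x a) b = rm x (a * b)"
  and lr: "rm (lm a x) b = lm a (rm x b)"
  using bb unfolding banach_bimodule_def by auto

lemma Dmul: "D (a * b) = lm a (D b) + rm (D a) b"
  using der unfolding derivation_def by auto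

lemmas bil = bounded_bilinear.add_left[OF L] bounded_bilinear.add_right[OF L]
  bounded_bilinear.diff_left[OF L] bounded_bilinear.diff_right[OF L]
  bounded_bilinear.add_left[OF R] bounded_bilinear.add_right[OF R]
  bounded_bilinear.diff_left[OF R] bounded_bilinear.diff_right[OF R]
  linear_diff[OF bounded_linear.linear[OF blD]] linear_add[OF bounded_linear.linear[OF blD]]

definition V :: "'a \<Rightarrow> 'a \<Rightarrow> 'x" where
  "V e a = rm (lm e (D a)) e + rm (D a) e - rm (rm (D a) e) e + lm e (D a) - lm e (lm e (D a))
     + lm a (lm e (D e) - rm (D e) e) - rm (lm e (D e) - rm (D e) e) a"

lemma V_eq:
  assumes c: "e * a = a * e"
  shows "V e a = D (e * a * e) - rm (D (a * e) - D a) e - lm e (D (e * a) - D a)"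
proof -
  have 1: "lm (e * a) y = lm a (lm e y)" for y using c by (simp add: ll)
  have 2: "rm (rm y a) e = rm (rm y e) a" for y using c by (simp add: rr)
  show ?thesis unfolding V_def
    apply (simp add: Dmul bil 1 2 lr ll[symmetric] algebra_simps)
    using c by (simp add: ll rr)
qed


definition Z :: "'a \<Rightarrow> 'x \<times> 'x \<Rightarrow> 'x" where
  "Z e p = rm (lm e (fst p)) e + rm (snd p) e - rm (rm (snd p) e) e + lm e (fst p) - lm e (lm e (fst p))
     + (lm e (D e) - rm (D e) e)"

lemma inner_lim:
  fixes F :: "('x \<times> 'x) filter"
  assumes c: "\<forall>b. e * b = b * e"
    and lim: "\<forall>a. ((\<lambda>(\<xi>, \<eta>). lm a \<xi> - rm \<eta> a) \<longlongrightarrow> D a) F"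
  shows "((\<lambda>p. lm a (Z e p) - rm (Z e p) a) \<longlongrightarrow> V e a) F"
proof -
  define f where "f b p = lm b (fst p) - rm (snd p) b" for b p
  have fl: "(f b \<longlongrightarrow> D b) F" for b
    using lim[rule_format, of b] unfolding f_def by (simp add: split_beta')
  have ca: "a * e = e * a" using c by simp
  define u where "u (p::'x \<times> 'x) = lm e (fst p)" for p
  define v where "v (p::'x \<times> 'x) = rm (snd p) e" for p
  have hu0: "lm a (u p) - rm (u p) a = f (e * a) p - rm (f e p) a" for p
    unfolding u_def f_def by (simp add: bil ll rr lr ca)
  have hu: "((\<lambda>p. lm a (u p) - rm (u p) a) \<longlongrightarrow> lm e (D a)) F"
  proof -
    have "((\<lambda>p. f (e * a) p - rm (f e p) a) \<longlongrightarrow> D (e * a) - rm (D e) a) F"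
      by (intro tendsto_diff fl bounded_bilinear.tendsto[OF R] tendsto_const)
    then show ?thesis by (simp add: hu0 Dmul)
  qed
  have hv0: "lm a (v p) - rm (v p) a = f (e * a) p - lm a (f e p)" for p
    unfolding v_def f_def by (simp add: bil ll rr lr ca)
  have hv: "((\<lambda>p. lm a (v p) - rm (v p) a) \<longlongrightarrow> rm (D a) e) F"
  proof -
    have "((\<lambda>p. f (e * a) p - lm a (f e p)) \<longlongrightarrow> D (e * a) - lm a (D e)) F"
      by (intro tendsto_diff fl bounded_bilinear.tendsto[OF L] tendsto_const)
    moreover have "D (e * a) = lm a (D e) + rm (D a) e" using Dmul[of a e] ca by simp
    ultimately show ?thesis by (simp add: hv0)
  qed
  define ad where "ad x = lm a x - rm x a" for x
  have adl: "ad (lm e x) = lm e (ad x)" for x unfolding ad_def by (simp add: bil ll rr lr ca)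
  have adr: "ad (rm x e) = rm (ad x) e" for x unfolding ad_def by (simp add: bil ll rr lr ca)
  have adp: "ad (x + y) = ad x + ad y" "ad (x - y) = ad x - ad y" for x y
    unfolding ad_def by (simp_all add: bil algebra_simps)
  have eq: "lm a (Z e p) - rm (Z e p) a = rm (ad (u p)) e + ad (v p) - rm (ad (v p)) e + ad (u p)
     - lm e (ad (u p)) + ad (lm e (D e) - rm (D e) e)" for p
    unfolding Z_def u_def[symmetric] v_def[symmetric] ad_def[symmetric]
    by (simp add: adp adl adr)
  have hu': "((\<lambda>p. ad (u p)) \<longlongrightarrow> lm e (D a)) F" using hu unfolding ad_def .
  have hv': "((\<lambda>p. ad (v p)) \<longlongrightarrow> rm (D a) e) F" using hv unfolding ad_def .
  have "((\<lambda>p. rm (ad (u p)) e + ad (v p) - rm (ad (v p)) e + ad (u p)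
     - lm e (ad (u p)) + ad (lm e (D e) - rm (D e) e)) \<longlongrightarrow>
     rm (lm e (D a)) e + rm (D a) e - rm (rm (D a) e) e + lm e (D a) - lm e (lm e (D a))
     + ad (lm e (D e) - rm (D e) e)) F"
    by (intro tendsto_add tendsto_diff hu' hv' tendsto_const
        bounded_bilinear.tendsto[OF R] bounded_bilinear.tendsto[OF L])
  then show ?thesis unfolding eq V_def ad_def by (simp add: algebra_simps)
qed


lemma e_lim:
  fixes Fe :: "'a filter"
  assumes ev: "eventually (\<lambda>e. (\<forall>b. e * b = b * e) \<and> norm e \<le> K) Fe"
    and ai: "\<forall>a. ((\<lambda>e. e * a) \<longlongrightarrow> a) Fe"
  shows "((\<lambda>e. V e a) \<longlongrightarrow> D a) Fe"
proof -
  have h1: "((\<lambda>e. e * a) \<longlongrightarrow> a) Fe" using ai by simp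
  have bf: "Bfun (\<lambda>e. e) Fe" by (rule BfunI[of _ K]) (use ev in \<open>auto elim: eventually_mono\<close>)
  have z1: "Zfun (\<lambda>e. e * a - a) Fe" using h1 by (simp add: tendsto_Zfun_iff)
  have "Zfun (\<lambda>e. e * (e * a - a)) Fe"
    by (rule bounded_bilinear.Bfun_prod_Zfun[OF bounded_bilinear_mult bf z1])
  then have "((\<lambda>e. e * (e * a - a)) \<longlongrightarrow> 0) Fe" by (simp add: tendsto_Zfun_iff)
  from tendsto_add[OF this h1]
  have h2: "((\<lambda>e. e * (e * a)) \<longlongrightarrow> a) Fe" by (simp add: algebra_simps)
  have "eventually (\<lambda>e. e * (e * a) = e * a * e) Fe"
    using ev by (rule eventually_mono) (metis mult.assoc)
  with h2 have h3: "((\<lambda>e. e * a * e) \<longlongrightarrow> a) Fe" by (simp add: tendsto_cong)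
  have h4: "((\<lambda>e. D (e * a * e)) \<longlongrightarrow> D a) Fe" by (rule bounded_linear.tendsto[OF blD h3])
  have h5a: "((\<lambda>e. D (e * a)) \<longlongrightarrow> D a) Fe" by (rule bounded_linear.tendsto[OF blD h1])
  have "eventually (\<lambda>e. D (e * a) = D (a * e)) Fe"
    using ev by (rule eventually_mono) metis
  with h5a have h5b: "((\<lambda>e. D (a * e)) \<longlongrightarrow> D a) Fe" by (simp add: tendsto_cong)
  have "Zfun (\<lambda>e. rm (D (a * e) - D a) e) Fe"
    by (rule bounded_bilinear.Zfun_prod_Bfun[OF R _ bf]) (use h5b in \<open>simp add: tendsto_Zfun_iff\<close>)
  then have h6: "((\<lambda>e. rm (D (a * e) - D a) e) \<longlongrightarrow> 0) Fe" by (simp add: tendsto_Zfun_iff)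
  have "Zfun (\<lambda>e. lm e (D (e * a) - D a)) Fe"
    by (rule bounded_bilinear.Bfun_prod_Zfun[OF L bf]) (use h5a in \<open>simp add: tendsto_Zfun_iff\<close>)
  then have h7: "((\<lambda>e. lm e (D (e * a) - D a)) \<longlongrightarrow> 0) Fe" by (simp add: tendsto_Zfun_iff)
  have "((\<lambda>e. D (e * a * e) - rm (D (a * e) - D a) e - lm e (D (e * a) - D a)) \<longlongrightarrow> D a - 0 - 0) Fe"
    by (intro tendsto_diff h4 h6 h7)
  moreover have "eventually (\<lambda>e. D (e * a * e) - rm (D (a * e) - D a) e - lm e (D (e * a) - D a) = V e a) Fe"
    using ev by (rule eventually_mono) (metis V_eq)
  ultimately show ?thesis by (simp add: tendsto_cong)
qed

lemma key:
  fixes Fe :: "'a filter" and F :: "('x \<times> 'x) filter"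
  assumes Fe: "Fe \<noteq> bot"
    and ev: "eventually (\<lambda>e. (\<forall>b. e * b = b * e) \<and> norm e \<le> K) Fe"
    and ai: "\<forall>a. ((\<lambda>e. e * a) \<longlongrightarrow> a) Fe"
    and F: "F \<noteq> bot"
    and lim: "\<forall>a. ((\<lambda>(\<xi>, \<eta>). lm a \<xi> - rm \<eta> a) \<longlongrightarrow> D a) F"
    and S: "finite S" and eps: "\<epsilon> > 0"
  shows "\<exists>\<zeta>. \<forall>a\<in>S. dist (lm a \<zeta> - rm \<zeta> a) (D a) < \<epsilon>"
proof -
  have "\<forall>a\<in>S. eventually (\<lambda>e. dist (V e a) (D a) < \<epsilon>/2) Fe"
    using eps by (intro ballI tendstoD[OF e_lim[OF ev ai]]) simp
  then have "eventually (\<lambda>e. \<forall>a\<in>S. dist (V e a) (D a) < \<epsilon>/2) Fe"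
    by (rule eventually_ball_finite[OF S])
  with ev have "eventually (\<lambda>e. (\<forall>b. e * b = b * e) \<and> (\<forall>a\<in>S. dist (V e a) (D a) < \<epsilon>/2)) Fe"
    by (rule eventually_elim2) blast
  then obtain e where c: "\<forall>b. e * b = b * e" and e1: "\<forall>a\<in>S. dist (V e a) (D a) < \<epsilon>/2"
    using eventually_happens'[OF Fe] by blast
  have "\<forall>a\<in>S. eventually (\<lambda>p. dist (lm a (Z e p) - rm (Z e p) a) (V e a) < \<epsilon>/2) F"
    using eps by (intro ballI tendstoD[OF inner_lim[OF c lim]]) simp
  then have "eventually (\<lambda>p. \<forall>a\<in>S. dist (lm a (Z e p) - rm (Z e p) a) (V e a) < \<epsilon>/2) F"
    by (rule eventually_ball_finite[OF S])
  then obtain p where p: "\<forall>a\<in>S. dist (lm a (Z e p) - rm (Z e p) a) (V e a) < \<epsilon>/2"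
    using eventually_happens'[OF F] by blast
  show ?thesis
  proof (intro exI ballI)
    fix a assume "a \<in> S"
    with p e1 have "dist (lm a (Z e p) - rm (Z e p) a) (V e a) < \<epsilon>/2" "dist (V e a) (D a) < \<epsilon>/2"
      by auto
    then show "dist (lm a (Z e p) - rm (Z e p) a) (D a) < \<epsilon>"
      using dist_triangle[of "lm a (Z e p) - rm (Z e p) a" "D a" "V e a"] by linarith
  qed
qed

end

theorem proposition2p4:
  fixes lm :: "'a::{real_normed_algebra,banach} \<Rightarrow> 'x::banach \<Rightarrow> 'x"
    and rm :: "'x \<Rightarrow> 'a \<Rightarrow> 'x"
    and D :: "'a \<Rightarrow> 'x"
  assumes "has_central_bai TYPE('a) \<or> (\<exists>u::'a. \<forall>a. u * a = a \<and> a * u = a)"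
    and "banach_bimodule lm rm"
    and "derivation lm rm D"
    and "approx_semi_inner lm rm D"
  shows "approx_inner lm rm D"
proof -
  have bai: "has_central_bai TYPE('a)"
    using assms(1)
  proof
    assume "\<exists>u::'a. \<forall>a. u * a = a \<and> a * u = a"
    then obtain u :: 'a where u: "\<forall>a. u * a = a \<and> a * u = a" by blast
    show "has_central_bai TYPE('a)"
      unfolding has_central_bai_def
    proof (intro exI conjI allI)
      show "principal {u} \<noteq> bot" by (simp add: principal_eq_bot_iff)
      show "eventually (\<lambda>e. (\<forall>b. e * b = b * e) \<and> norm e \<le> norm u) (principal {u})"
        using u by (simp add: eventually_principal)
      fix a
      show "((\<lambda>e. e * a) \<longlongrightarrow> a) (principal {u})"
        by (rule tendsto_eventually) (use u in \<open>simp add: eventually_principal\<close>)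
    qed
  qed
  then obtain Fe :: "'a filter" and K where Fe: "Fe \<noteq> bot"
    and ev: "eventually (\<lambda>e. (\<forall>b. e * b = b * e) \<and> norm e \<le> K) Fe"
    and ai: "\<forall>a. ((\<lambda>e. e * a) \<longlongrightarrow> a) Fe"
    unfolding has_central_bai_def by blast
  from assms(4) obtain F :: "('x \<times> 'x) filter" where blD: "bounded_linear D" and F: "F \<noteq> bot"
    and lim: "\<forall>a. ((\<lambda>(\<xi>, \<eta>). lm a \<xi> - rm \<eta> a) \<longlongrightarrow> D a) F"
    unfolding approx_semi_inner_def by blast
  note k = key[OF assms(2) assms(3) blD Fe ev ai F lim]
  define B where "B = {(S :: 'a set, \<epsilon>::real). finite S \<and> \<epsilon> > 0}"
  define P where "P b = principal {\<zeta>. \<forall>a\<in>fst b. dist (lm a \<zeta> - rm \<zeta> a) (D a) < snd b}" for b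
  define G where "G = (INF b\<in>B. P b)"
  have Bne: "B \<noteq> {}" unfolding B_def using zero_less_one by blast
  have dir: "\<exists>x\<in>B. P x \<le> inf (P a) (P b)" if "a \<in> B" "b \<in> B" for a b
  proof (intro bexI)
    show "(fst a \<union> fst b, min (snd a) (snd b)) \<in> B" using that unfolding B_def by auto
    show "P (fst a \<union> fst b, min (snd a) (snd b)) \<le> inf (P a) (P b)"
      unfolding P_def inf_principal principal_le_iff by auto
  qed
  have evG: "eventually Q G \<longleftrightarrow> (\<exists>b\<in>B. eventually Q (P b))" for Q
    unfolding G_def by (rule eventually_INF_base[OF Bne dir])
  have "G \<noteq> bot"
  proof
    assume "G = bot"
    then have "eventually (\<lambda>_. False) G" by simp
    then obtain b where "b \<in> B" "eventually (\<lambda>_. False) (P b)" using evG by blast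
    then show False using k[of "fst b" "snd b"] unfolding B_def P_def
      apply (auto simp: eventually_principal) by blast
  qed
  moreover have "((\<lambda>\<zeta>. lm a \<zeta> - rm \<zeta> a) \<longlongrightarrow> D a) G" for a
  proof (rule tendstoI)
    fix \<epsilon> :: real assume "\<epsilon> > 0"
    then have "({a}, \<epsilon>) \<in> B" unfolding B_def by auto
    moreover have "eventually (\<lambda>\<zeta>. dist (lm a \<zeta> - rm \<zeta> a) (D a) < \<epsilon>) (P ({a}, \<epsilon>))"
      unfolding P_def by (simp add: eventually_principal)
    ultimately show "eventually (\<lambda>\<zeta>. dist (lm a \<zeta> - rm \<zeta> a) (D a) < \<epsilon>) G"
      using evG by blast
  qed
  ultimately show ?thesis unfolding approx_inner_def using blD by blast
qed

end
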